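(* Let $f:(0,\infty)\to(0,\infty)$ satisfy $\lim_{\beta\to\infty}f(\beta)=\infty$, $\lim_{\beta\to\infty}\frac1\beta\log f(\beta)=0$ and $\lim_{\beta\to\infty}|\Lambda_\beta|/f(\beta)=\infty$, and let $\mathcal W=\{\sigma\in\mathcal S:|\mathrm{supp}[\sigma]|\le|\Lambda_\beta|/f(\beta)\}$. Then $$\lim_{\beta\to\infty}\frac1\beta\log\frac{\mu_\beta(\mathcal S\setminus\mathcal W)}{\mu_\beta(\mathcal S)}=-\infty.$$
   Context: Glauber setting. Fix $J>0$, $h>0$ with $0<h<2J$ and $2J/h\notin\mathbb N$; $\ell_c=\lceil 2J/h\rceil$. $\Lambda_\beta\subset\mathbb Z^2$: square box of odd side length centred at the origin with periodic boundary conditions, $|\Lambda_\beta|\to\infty$. State space $\mathcal X_\beta=\{-1,+1\}^{\Lambda_\beta}$, $\mathrm{supp}[\sigma]=\{x:\sigma(x)=+1\}$. Hamiltonian $H_\beta(\sigma)=-\frac J2\sum_{\{x,y\}}\sigma(x)\sigma(y)-\frac h2\sum_x\sigma(x)$ (unordered nearest-neighbour pairs); Gibbs measure $\mu_\beta=e^{-\beta H_\beta}/Z_\beta$. Bootstrap map $C_B(\sigma)$: replace each cluster of $(+1)$-spins by its circumscribed rectangle and iterate (merging rectangles at distance $<2$) until the $(+1)$-spins form rectangles pairwise at distance $\ge2$; subcritical: each such rectangle fits in an $(\ell_c-1)\times\ell_c$ rectangle. $\mathcal S=\{\sigma:C_B(\sigma)\text{ subcritical}\}$. *)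

theory Defs
  imports "HOL-Analysis.Analysis"
begin

text \<open>The box of side L (centred at the origin in the paper) is represented, up to
translation, by the coordinates {0..<L} x {0..<L} with periodic boundary conditions.
A configuration sigma in {-1,+1}^Lambda is represented by its support
supp[sigma] = {x. sigma x = +1}, a subset of Lambda.\<close>

definition Lam :: "nat \<Rightarrow> (nat \<times> nat) set" where
  "Lam L = {0..<L} \<times> {0..<L}"

definition cd :: "nat \<Rightarrow> nat \<Rightarrow> nat \<Rightarrow> nat" where
  "cd L a b = min ((a + L - b) mod L) ((b + L - a) mod L)"

definition nn :: "nat \<Rightarrow> nat \<times> nat \<Rightarrow> nat \<times> nat \<Rightarrow> bool" where
  "nn L x y \<longleftrightarrow>
     (fst x = fst y \<and> cd L (snd x) (snd y) = 1) \<or> (snd x = snd y \<and> cd L (fst x) (fst y) = 1)"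

definition edges :: "nat \<Rightarrow> (nat \<times> nat) set set" where
  "edges L = {{x, y} | x y. x \<in> Lam L \<and> y \<in> Lam L \<and> nn L x y}"

definition spin :: "(nat \<times> nat) set \<Rightarrow> nat \<times> nat \<Rightarrow> real" where
  "spin A x = (if x \<in> A then 1 else -1)"

definition Ham :: "nat \<Rightarrow> real \<Rightarrow> real \<Rightarrow> (nat \<times> nat) set \<Rightarrow> real" where
  "Ham L J h A = - (J / 2) * (\<Sum>e\<in>edges L. \<Prod>x\<in>e. spin A x)
                 - (h / 2) * (\<Sum>x\<in>Lam L. spin A x)"

definition Xs :: "nat \<Rightarrow> (nat \<times> nat) set set" where
  "Xs L = Pow (Lam L)"

definition Zpart :: "nat \<Rightarrow> real \<Rightarrow> real \<Rightarrow> real \<Rightarrow> real" where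
  "Zpart L J h \<beta> = (\<Sum>A\<in>Xs L. exp (- \<beta> * Ham L J h A))"

definition gibbs :: "nat \<Rightarrow> real \<Rightarrow> real \<Rightarrow> real \<Rightarrow> (nat \<times> nat) set set \<Rightarrow> real" where
  "gibbs L J h \<beta> W = (\<Sum>A\<in>W \<inter> Xs L. exp (- \<beta> * Ham L J h A)) / Zpart L J h \<beta>"

definition arc :: "nat \<Rightarrow> nat \<Rightarrow> nat \<Rightarrow> nat set" where
  "arc L a w = {(a + i) mod L | i. i < w}"

definition is_arc :: "nat \<Rightarrow> nat set \<Rightarrow> bool" where
  "is_arc L X \<longleftrightarrow> (\<exists>a w. a < L \<and> 1 \<le> w \<and> w \<le> L \<and> X = arc L a w)"

definition is_rect :: "nat \<Rightarrow> (nat \<times> nat) set \<Rightarrow> bool" where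
  "is_rect L R \<longleftrightarrow> (\<exists>X Y. is_arc L X \<and> is_arc L Y \<and> R = X \<times> Y)"

definition is_circ :: "nat \<Rightarrow> (nat \<times> nat) set \<Rightarrow> (nat \<times> nat) set \<Rightarrow> bool" where
  "is_circ L A R \<longleftrightarrow> is_rect L R \<and> A \<subseteq> R \<and> (\<forall>R'. is_rect L R' \<and> A \<subseteq> R' \<longrightarrow> R \<subseteq> R')"

text \<open>two sets of sites are at (Euclidean, periodic) distance < 2 iff they contain
sites differing by at most 1 in each coordinate\<close>
definition close :: "nat \<Rightarrow> (nat \<times> nat) set \<Rightarrow> (nat \<times> nat) set \<Rightarrow> bool" where
  "close L R1 R2 \<longleftrightarrow>
     (\<exists>x\<in>R1. \<exists>y\<in>R2. cd L (fst x) (fst y) \<le> 1 \<and> cd L (snd x) (snd y) \<le> 1)"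

definition cluster :: "nat \<Rightarrow> (nat \<times> nat) set \<Rightarrow> nat \<times> nat \<Rightarrow> (nat \<times> nat) set" where
  "cluster L A x = {y. (\<lambda>u v. u \<in> A \<and> v \<in> A \<and> nn L u v)\<^sup>*\<^sup>* x y}"

definition init_rects :: "nat \<Rightarrow> (nat \<times> nat) set \<Rightarrow> (nat \<times> nat) set set" where
  "init_rects L A = {R. \<exists>x\<in>A. is_circ L (cluster L A x) R}"

definition merge_step :: "nat \<Rightarrow> (nat \<times> nat) set set \<Rightarrow> (nat \<times> nat) set set \<Rightarrow> bool" where
  "merge_step L F F' \<longleftrightarrow>
     (\<exists>R1\<in>F. \<exists>R2\<in>F. \<exists>R. R1 \<noteq> R2 \<and> close L R1 R2 \<and> is_circ L (R1 \<union> R2) R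
        \<and> F' = insert R (F - {R1, R2}))"

definition bootstrap_final :: "nat \<Rightarrow> (nat \<times> nat) set \<Rightarrow> (nat \<times> nat) set set \<Rightarrow> bool" where
  "bootstrap_final L A F \<longleftrightarrow>
     (merge_step L)\<^sup>*\<^sup>* (init_rects L A) F
     \<and> (\<forall>R1\<in>F. \<forall>R2\<in>F. R1 \<noteq> R2 \<longrightarrow> \<not> close L R1 R2)"

definition CB :: "nat \<Rightarrow> (nat \<times> nat) set \<Rightarrow> (nat \<times> nat) set set" where
  "CB L A = (SOME F. bootstrap_final L A F)"

definition fits :: "nat \<Rightarrow> nat \<Rightarrow> (nat \<times> nat) set \<Rightarrow> bool" where
  "fits L lc R \<longleftrightarrow> (\<exists>a b w v. R \<subseteq> arc L a w \<times> arc L b v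
       \<and> ((w \<le> lc - 1 \<and> v \<le> lc) \<or> (w \<le> lc \<and> v \<le> lc - 1)))"

definition subcritical :: "nat \<Rightarrow> nat \<Rightarrow> (nat \<times> nat) set set \<Rightarrow> bool" where
  "subcritical L lc F \<longleftrightarrow> (\<forall>R\<in>F. fits L lc R)"

definition Sset :: "nat \<Rightarrow> nat \<Rightarrow> (nat \<times> nat) set set" where
  "Sset L lc = {A \<in> Xs L. subcritical L lc (CB L A)}"

definition Wset :: "nat \<Rightarrow> nat \<Rightarrow> real \<Rightarrow> (nat \<times> nat) set set" where
  "Wset L lc fb = {A \<in> Sset L lc. real (card A) \<le> real (card (Lam L)) / fb}"

end

theory Submission
  imports Defs
begin


lemma mod2: "n < 2*L \<Longrightarrow> (n::nat) mod L = (if n < L then n else n - L)"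
  by (simp add: le_mod_geq)

lemma msub: "a < L \<Longrightarrow> b < L \<Longrightarrow> ((a::nat) + L - b) mod L = (if b \<le> a then a - b else a + L - b)"
  by (subst mod2) auto

lemma cd_eq: "a < L \<Longrightarrow> b < L \<Longrightarrow> cd L a b = min (if b \<le> a then a - b else a + L - b) (if a \<le> b then b - a else b + L - a)"
  unfolding cd_def by (simp add: msub)

lemma cd_self[simp]: "cd L a a = 0"
  unfolding cd_def by simp

lemma cd_sym: "cd L a b = cd L b a"
  unfolding cd_def by simp

lemma arc_char: "a < L \<Longrightarrow> w \<le> L \<Longrightarrow> arc L a w = {x. x < L \<and> (x + L - a) mod L < w}"
proof (intro set_eqI iffI)
  fix x assume "a < L" "w \<le> L" "x \<in> arc L a w"
  then obtain i where i: "i < w" "x = (a+i) mod L" unfolding arc_def by auto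
  then show "x \<in> {x. x < L \<and> (x + L - a) mod L < w}" using \<open>a<L\<close> \<open>w \<le> L\<close>
    by (auto simp: mod2 msub)
next
  fix x assume a: "a < L" "w \<le> L" "x \<in> {x. x < L \<and> (x + L - a) mod L < w}"
  then have "x = (a + (x + L - a) mod L) mod L" by (auto simp: msub mod2)
  then show "x \<in> arc L a w" using a unfolding arc_def by blast
qed

lemma arc_sub: "0 < L \<Longrightarrow> arc L a w \<subseteq> {..<L}"
  unfolding arc_def by auto

lemma card_arc: "card (arc L a w) \<le> w"
proof -
  have "arc L a w = (\<lambda>i. (a+i) mod L) ` {..<w}" unfolding arc_def by auto
  then show ?thesis by (metis card_image_le card_lessThan finite_lessThan)
qed

lemma arc_mem: "i < w \<Longrightarrow> (a+i) mod L \<in> arc L a w"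
  unfolding arc_def by (intro CollectI exI[of _ i]) simp

lemma arc_ne: "1 \<le> w \<Longrightarrow> arc L a w \<noteq> {}"
  using arc_mem[of 0 w a L] by auto

definition conn :: "nat \<Rightarrow> nat set \<Rightarrow> bool" where
  "conn L P \<longleftrightarrow> (\<forall>x\<in>P. \<forall>y\<in>P. (\<lambda>u v. u \<in> P \<and> v \<in> P \<and> cd L u v \<le> 1)\<^sup>*\<^sup>* x y)"

lemma conn_rooted:
  assumes "x0 \<in> P" "\<forall>y\<in>P. (\<lambda>u v. u \<in> P \<and> v \<in> P \<and> cd L u v \<le> 1)\<^sup>*\<^sup>* x0 y"
  shows "conn L P"
proof -
  let ?R = "\<lambda>u v. u \<in> P \<and> v \<in> P \<and> cd L u v \<le> 1"
  have "symp ?R" by (auto simp: symp_def cd_sym)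
  then have s: "symp ?R\<^sup>*\<^sup>*" by (rule symp_rtranclp)
  show ?thesis unfolding conn_def
  proof (intro ballI)
    fix x y assume "x \<in> P" "y \<in> P"
    then have "?R\<^sup>*\<^sup>* x x0" using assms s by (meson sympD)
    then show "?R\<^sup>*\<^sup>* x y" using assms \<open>y\<in>P\<close> by (meson rtranclp_trans)
  qed
qed

lemma arc_conn:
  assumes "0 < L" shows "conn L (arc L a w)"
proof (cases "w = 0")
  case True then show ?thesis unfolding conn_def arc_def by auto
next
  case False
  let ?P = "arc L a w"
  let ?R = "\<lambda>u v. u \<in> ?P \<and> v \<in> ?P \<and> cd L u v \<le> 1"
  have step: "cd L c ((c+1) mod L) \<le> 1" if "c < L" for c
    using that assms by (cases "c + 1 < L") (auto simp: cd_eq mod2)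
  have "\<forall>k<w. ?R\<^sup>*\<^sup>* (a mod L) ((a+k) mod L)"
  proof (intro allI impI)
    fix k assume "k < w" then show "?R\<^sup>*\<^sup>* (a mod L) ((a+k) mod L)"
    proof (induction k)
      case 0 then show ?case by simp
    next
      case (Suc k)
      have m1: "(a+k) mod L \<in> ?P" "(a + Suc k) mod L \<in> ?P" using Suc.prems arc_mem by (auto simp del: add_Suc_right)
      have "(a + Suc k) mod L = ((a+k) mod L + 1) mod L" by (simp add: mod_Suc_eq)
      then have "cd L ((a+k) mod L) ((a + Suc k) mod L) \<le> 1" using step[of "(a+k) mod L"] assms by simp
      then have r: "?R ((a+k) mod L) ((a + Suc k) mod L)" using m1 by simp
      have IH: "?R\<^sup>*\<^sup>* (a mod L) ((a+k) mod L)" using Suc by simp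
      show ?case by (rule rtranclp.rtrancl_into_rtrancl[OF IH r])
    qed
  qed
  then show ?thesis
    apply (intro conn_rooted[of "a mod L"])
    using False unfolding arc_def apply force
    unfolding arc_def by auto
qed


lemma msub_int: "a < L \<Longrightarrow> b < L \<Longrightarrow> int (((a::nat) + L - b) mod L) = (if int b \<le> int a then int a - int b else int a + int L - int b)"
  by (simp add: msub of_nat_diff)

lemma tstep_int: "\<lbrakk>(0::int) \<le> a; a < L; 0\<le>u; u<L; 0 \<le> v; v<L; tu = (if a \<le> u then u - a else u + L - a); tv = (if a \<le> v then v - a else v + L - a); tu \<le> L-2; tv \<le> L-2; (if v \<le> u then u - v else u + L - v) \<le> 1 \<or> (if u \<le> v then v - u else v + L - u) \<le> 1\<rbrakk> \<Longrightarrow> tv \<le> tu + 1"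
  by (cases "a \<le> u"; cases "a \<le> v"; cases "v \<le> u"; simp; linarith)

lemma tstep:
  fixes a L u v :: nat
  assumes "2 \<le> L" "a<L" "u<L" "v<L" "(u+L-a) mod L \<le> L-2" "(v+L-a) mod L \<le> L-2" "cd L u v \<le> 1"
  shows "(v+L-a) mod L \<le> (u+L-a) mod L + 1"
proof -
  have D0: "(u + L - v) mod L \<le> 1 \<or> (v + L - u) mod L \<le> 1" using assms(7) unfolding cd_def by linarith
  have D: "(if int v \<le> int u then int u - int v else int u + int L - int v) \<le> 1 \<or> (if int u \<le> int v then int v - int u else int v + int L - int u) \<le> 1"
    using D0 msub_int[of u L v] msub_int[of v L u] assms by linarith
  have tv: "int ((v+L-a) mod L) = (if int a \<le> int v then int v - int a else int v + int L - int a)" using assms msub_int by blast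
  have tu: "int ((u+L-a) mod L) = (if int a \<le> int u then int u - int a else int u + int L - int a)" using assms msub_int by blast
  have iL: "int (L-2) = int L - 2" using assms(1) by simp
  have "int ((u+L-a) mod L) \<le> int (L-2)" "int ((v+L-a) mod L) \<le> int (L-2)"
    by (simp only: of_nat_le_iff; rule assms)+
  then have L2: "int ((u+L-a) mod L) \<le> int L - 2" "int ((v+L-a) mod L) \<le> int L - 2" unfolding iL .
  have "int ((v+L-a) mod L) \<le> int ((u+L-a) mod L) + 1"
    by (rule tstep_int[OF _ _ _ _ _ _ tu tv L2 D]) (use assms in auto)
  then show ?thesis by linarith
qed

lemma shift_int: "\<lbrakk>(0::int) \<le> a; a < L; 0 \<le> x; x < L; 0 \<le> m; m \<le> M; M+2 \<le> L;
   b = (if a+m < L then a+m else a+m-L); e1 = (if b \<le> x then x - b else x + L - b);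
   e2 = (if a \<le> x then x - a else x + L - a)\<rbrakk> \<Longrightarrow> (e1 < M - m + 1) = (m \<le> e2 \<and> e2 \<le> M)"
  by (cases "a+m < L"; cases "a \<le> x"; cases "b \<le> x"; simp; linarith)

lemma shift_arc:
  fixes a L x m M :: nat
  assumes "a<L" "x<L" "m \<le> M" "M+2 \<le> L"
  shows "((x + L - (a+m) mod L) mod L < M - m + 1) = (m \<le> (x+L-a) mod L \<and> (x+L-a) mod L \<le> M)"
proof -
  define b where "b = (a+m) mod L"
  have b: "int b = (if int a + int m < int L then int a + int m else int a + int m - int L)"
    using assms mod2[of "a+m" L] by (simp add: b_def of_nat_diff)
  have bL: "b < L" using assms by (simp add: b_def)
  have e1: "int ((x + L - b) mod L) = (if int b \<le> int x then int x - int b else int x + int L - int b)"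
    using msub_int[OF assms(2) bL] .
  have e2: "int ((x+L-a) mod L) = (if int a \<le> int x then int x - int a else int x + int L - int a)"
    using assms msub_int by blast
  have F: "(int ((x + L - b) mod L) < int M - int m + 1) = (int m \<le> int ((x+L-a) mod L) \<and> int ((x+L-a) mod L) \<le> int M)"
    by (rule shift_int[OF _ _ _ _ _ _ _ b e1 e2]) (use assms in auto)
  have eq: "int M - int m + 1 = int (M - m + 1)" using assms by simp
  have "(int ((x + L - b) mod L) < int (M - m + 1)) = (int m \<le> int ((x+L-a) mod L) \<and> int ((x+L-a) mod L) \<le> int M)"
    using F unfolding eq .
  then have "(int ((x + L - b) mod L) < int (M - m + 1)) = (m \<le> (x+L-a) mod L \<and> (x+L-a) mod L \<le> M)"
    by (simp only: of_nat_le_iff)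
  then show ?thesis unfolding b_def[symmetric] by (simp only: of_nat_less_iff)
qed

lemma ivt_path:
  fixes f :: "nat \<Rightarrow> nat"
  assumes "R\<^sup>*\<^sup>* x y" "x \<in> P"
    and "\<And>u v. R u v \<Longrightarrow> v \<in> P \<and> f v \<le> f u + 1 \<and> f u \<le> f v + 1"
  shows "\<forall>k. min (f x) (f y) \<le> k \<and> k \<le> max (f x) (f y) \<longrightarrow> (\<exists>z\<in>P. f z = k)"
  using assms(1)
proof (induction rule: rtranclp_induct)
  case base then show ?case using assms(2) by auto
next
  case (step y z)
  have z: "z \<in> P" "f z \<le> f y + 1" "f y \<le> f z + 1" using assms(3)[OF step(2)] by auto
  show ?case
  proof (intro allI impI)
    fix k assume k: "min (f x) (f z) \<le> k \<and> k \<le> max (f x) (f z)"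
    show "\<exists>z\<in>P. f z = k"
    proof (cases "min (f x) (f y) \<le> k \<and> k \<le> max (f x) (f y)")
      case True then show ?thesis using step.IH by blast
    next
      case False
      then have "k = f z" using k z by auto
      then show ?thesis using z by blast
    qed
  qed
qed

lemma conn_arc:
  assumes L: "0 < L" and P: "P \<subseteq> {..<L}" "P \<noteq> {}" and c: "conn L P"
  shows "is_arc L P"
proof (cases "P = {..<L}")
  case True
  have "arc L 0 L = {x. x<L \<and> (x + L - 0) mod L < L}" by (rule arc_char) (use L in auto)
  also have "\<dots> = {..<L}" by auto
  finally have eq: "P = arc L 0 L" using True by simp
  show ?thesis unfolding is_arc_def
    by (rule exI[of _ 0], rule exI[of _ L]) (use eq L in simp)
next
  case False
  then obtain g where g: "g < L" "g \<notin> P" using P by auto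
  have L2: "2 \<le> L"
  proof (rule ccontr)
    assume "\<not> 2 \<le> L" then have "L = 1" using L by simp
    then have "P = {..<L}" using P by auto
    then show False using False by simp
  qed
  define a where "a = (g+1) mod L"
  have aL: "a < L" using L by (simp add: a_def)
  define t where "t x = (x + L - a) mod L" for x
  have inv: "x = (a + t x) mod L" if "x < L" for x
  proof -
    have "(a + t x) mod L = (a + (x+L-a)) mod L" unfolding t_def by (simp add: mod_add_right_eq)
    also have "a + (x+L-a) = x + L" using aL by simp
    finally show ?thesis using that by simp
  qed
  have tL: "t x < L" for x using L by (simp add: t_def)
  have tg: "t g = L - 1"
  proof (cases "g+1 < L")
    case True
    then have "a = g + 1" unfolding a_def by simp
    then have "g + L - a = L - 1" by simp
    then show ?thesis unfolding t_def using L by simp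
  next
    case False
    then have gL: "g + 1 = L" using g by simp
    then have "a = 0" unfolding a_def by simp
    then have "t g = (g + L) mod L" unfolding t_def by simp
    also have "\<dots> = g" using g by simp
    finally show ?thesis using gL by simp
  qed
  have tP: "t x \<le> L - 2" if "x \<in> P" for x
  proof -
    have "x < L" using that P by auto
    have "x \<noteq> g" using that g by auto
    then have "t x \<noteq> t g" using inv[OF \<open>x<L\<close>] inv[OF g(1)] by metis
    then show ?thesis using tg tL[of x] by linarith
  qed
  define m where "m = Min (t ` P)"
  define M where "M = Max (t ` P)"
  have fin: "finite P" using P finite_subset by blast
  have "m \<in> t ` P" unfolding m_def using fin P by (intro Min_in) auto
  then obtain xm where xm: "xm \<in> P" "t xm = m" by blast
  have "M \<in> t ` P" unfolding M_def using fin P by (intro Max_in) auto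
  then obtain xM where xM: "xM \<in> P" "t xM = M" by blast
  have mle: "m \<le> t x" "t x \<le> M" if "x \<in> P" for x
    using that fin by (auto simp: m_def M_def)
  have mM: "m \<le> M" using mle xm by auto
  have M2: "M + 2 \<le> L" using tP[OF xM(1)] xM L2 by linarith
  let ?R = "\<lambda>u v. u \<in> P \<and> v \<in> P \<and> cd L u v \<le> 1"
  have path: "?R\<^sup>*\<^sup>* xm xM" using c xm xM unfolding conn_def by blast
  have stp: "v \<in> P \<and> t v \<le> t u + 1 \<and> t u \<le> t v + 1" if "?R u v" for u v
  proof -
    have "u < L" "v < L" using that P by auto
    moreover have "cd L v u \<le> 1" using that cd_sym by metis
    moreover have "t u \<le> L-2" "t v \<le> L-2" using tP that by auto
    ultimately show ?thesis using that tstep[OF L2 aL, of u v] tstep[OF L2 aL, of v u] unfolding t_def by auto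
  qed
  have ivt: "\<forall>k. min (t xm) (t xM) \<le> k \<and> k \<le> max (t xm) (t xM) \<longrightarrow> (\<exists>z\<in>P. t z = k)"
    by (rule ivt_path[OF path xm(1)]) (use stp in blast)
  have Peq: "P = {x. x < L \<and> m \<le> t x \<and> t x \<le> M}"
  proof (intro set_eqI iffI)
    fix x assume "x \<in> P" then show "x \<in> {x. x < L \<and> m \<le> t x \<and> t x \<le> M}" using P mle by auto
  next
    fix x assume x: "x \<in> {x. x < L \<and> m \<le> t x \<and> t x \<le> M}"
    then obtain z where z: "z \<in> P" "t z = t x" using ivt xm xM mM by auto
    have "z < L" using z P by auto
    have "x < L" using x by simp
    then have "z = x" using inv[OF \<open>z<L\<close>] inv[of x] z(2) by metis
    then show "x \<in> P" using z by simp
  qed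
  have "arc L ((a+m) mod L) (M - m + 1) = {x. x < L \<and> (x + L - (a+m) mod L) mod L < M - m + 1}"
    by (rule arc_char) (use L M2 in auto)
  also have "\<dots> = P" unfolding Peq t_def using shift_arc[OF aL _ mM M2] by blast
  finally have "arc L ((a+m) mod L) (M - m + 1) = P" .
  then show ?thesis unfolding is_arc_def using L M2 by (intro exI[of _ "(a+m) mod L"] exI[of _ "M - m + 1"]) auto
qed


lemma arc_props:
  assumes "0 < L" "is_arc L X" shows "X \<subseteq> {..<L}" "X \<noteq> {}" "conn L X"
  using assms arc_sub arc_ne arc_conn unfolding is_arc_def by auto

lemma circ_of:
  assumes "S \<noteq> {}" "is_arc L (fst ` S)" "is_arc L (snd ` S)"
  shows "is_circ L S (fst ` S \<times> snd ` S)"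
  unfolding is_circ_def
proof (intro conjI allI impI)
  show "is_rect L (fst ` S \<times> snd ` S)" unfolding is_rect_def using assms by blast
  show "S \<subseteq> fst ` S \<times> snd ` S" by (auto intro: rev_image_eqI)
  fix R' assume R': "is_rect L R' \<and> S \<subseteq> R'"
  then obtain X Y where "R' = X \<times> Y" unfolding is_rect_def by blast
  then show "fst ` S \<times> snd ` S \<subseteq> R'" using R' by auto
qed

lemma nn_cd: "nn L u v \<Longrightarrow> cd L (fst u) (fst v) \<le> 1 \<and> cd L (snd u) (snd v) \<le> 1"
  unfolding nn_def by auto

lemma conn_union:
  assumes "conn L X" "conn L Y" "x \<in> X" "y \<in> Y" "cd L x y \<le> 1"
  shows "conn L (X \<union> Y)"
proof (rule conn_rooted[of x])
  show "x \<in> X \<union> Y" using assms by simp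
  let ?Q = "\<lambda>u v. u \<in> X \<union> Y \<and> v \<in> X \<union> Y \<and> cd L u v \<le> 1"
  have mX: "?Q\<^sup>*\<^sup>* a b" if "(\<lambda>u v. u \<in> X \<and> v \<in> X \<and> cd L u v \<le> 1)\<^sup>*\<^sup>* a b" for a b
    using mono_rtranclp[of "\<lambda>u v. u \<in> X \<and> v \<in> X \<and> cd L u v \<le> 1" ?Q a b] that by blast
  have mY: "?Q\<^sup>*\<^sup>* a b" if "(\<lambda>u v. u \<in> Y \<and> v \<in> Y \<and> cd L u v \<le> 1)\<^sup>*\<^sup>* a b" for a b
    using mono_rtranclp[of "\<lambda>u v. u \<in> Y \<and> v \<in> Y \<and> cd L u v \<le> 1" ?Q a b] that by blast
  show "\<forall>z\<in>X \<union> Y. ?Q\<^sup>*\<^sup>* x z"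
  proof
    fix z assume "z \<in> X \<union> Y"
    then show "?Q\<^sup>*\<^sup>* x z"
    proof
      assume "z \<in> X" then show ?thesis using assms mX unfolding conn_def by blast
    next
      assume z: "z \<in> Y"
      have q: "?Q x y" using assms by simp
      have "?Q\<^sup>*\<^sup>* y z" using assms mY z unfolding conn_def by blast
      then show ?thesis by (rule converse_rtranclp_into_rtranclp[of ?Q, OF q])
    qed
  qed
qed

lemma rect_split:
  assumes "0 < L" "is_rect L R"
  obtains X Y where "R = X \<times> Y" "is_arc L X" "is_arc L Y" "fst ` R = X" "snd ` R = Y"
proof -
  obtain X Y where "R = X \<times> Y" "is_arc L X" "is_arc L Y" using assms unfolding is_rect_def by blast
  moreover then have "X \<noteq> {}" "Y \<noteq> {}" using arc_props assms by auto
  ultimately show ?thesis using that by auto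
qed

lemma rect_sub: "0 < L \<Longrightarrow> is_rect L R \<Longrightarrow> R \<subseteq> Lam L"
  by (metis arc_props(1) Lam_def atLeast0LessThan mult_mono rect_split subset_refl Sigma_mono)

lemma merge_circ:
  assumes L: "0 < L" and r: "is_rect L R1" "is_rect L R2" and c: "close L R1 R2"
  shows "\<exists>R. is_circ L (R1 \<union> R2) R"
proof -
  obtain X1 Y1 where 1: "R1 = X1 \<times> Y1" "is_arc L X1" "is_arc L Y1" "fst ` R1 = X1" "snd ` R1 = Y1"
    using rect_split[OF L r(1)] by blast
  obtain X2 Y2 where 2: "R2 = X2 \<times> Y2" "is_arc L X2" "is_arc L Y2" "fst ` R2 = X2" "snd ` R2 = Y2"
    using rect_split[OF L r(2)] by blast
  obtain p q where pq: "p \<in> R1" "q \<in> R2" "cd L (fst p) (fst q) \<le> 1" "cd L (snd p) (snd q) \<le> 1"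
    using c unfolding close_def by blast
  have f: "is_arc L (fst ` (R1 \<union> R2))"
  proof -
    have "fst ` (R1 \<union> R2) = X1 \<union> X2" using 1 2 by (simp add: image_Un)
    moreover have "conn L (X1 \<union> X2)"
      using conn_union[of L X1 X2 "fst p" "fst q"] arc_props[OF L] 1 2 pq by auto
    moreover have "X1 \<union> X2 \<subseteq> {..<L}" "X1 \<union> X2 \<noteq> {}" using arc_props[OF L] 1 2 by auto
    ultimately show ?thesis using conn_arc[OF L] by simp
  qed
  have s: "is_arc L (snd ` (R1 \<union> R2))"
  proof -
    have "snd ` (R1 \<union> R2) = Y1 \<union> Y2" using 1 2 by (simp add: image_Un)
    moreover have "conn L (Y1 \<union> Y2)"
      using conn_union[of L Y1 Y2 "snd p" "snd q"] arc_props[OF L] 1 2 pq by auto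
    moreover have "Y1 \<union> Y2 \<subseteq> {..<L}" "Y1 \<union> Y2 \<noteq> {}" using arc_props[OF L] 1 2 by auto
    ultimately show ?thesis using conn_arc[OF L] by simp
  qed
  show ?thesis using circ_of[OF _ f s] pq by blast
qed

lemma cluster_circ:
  assumes L: "0 < L" and A: "A \<subseteq> Lam L" "x \<in> A"
  shows "\<exists>R. is_circ L (cluster L A x) R \<and> x \<in> R"
proof -
  let ?RA = "\<lambda>u v. u \<in> A \<and> v \<in> A \<and> nn L u v"
  let ?C = "cluster L A x"
  have xC: "x \<in> ?C" unfolding cluster_def by simp
  have CA: "?C \<subseteq> A"
  proof
    fix y assume "y \<in> ?C"
    then have "?RA\<^sup>*\<^sup>* x y" unfolding cluster_def by simp
    then show "y \<in> A" using A by (induction rule: rtranclp_induct) auto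
  qed
  have CL: "?C \<subseteq> Lam L" using CA A by blast
  have proj: "conn L (pr ` ?C) \<and> pr ` ?C \<subseteq> {..<L}" if pr: "\<forall>u v. nn L u v \<longrightarrow> cd L (pr u) (pr v) \<le> 1"
      "\<forall>u \<in> Lam L. pr u < L" for pr :: "nat \<times> nat \<Rightarrow> nat"
  proof
    show "pr ` ?C \<subseteq> {..<L}" using CL pr by auto
    let ?Q = "\<lambda>u v. u \<in> pr ` ?C \<and> v \<in> pr ` ?C \<and> cd L u v \<le> 1"
    show "conn L (pr ` ?C)"
    proof (rule conn_rooted[of "pr x"])
      show "pr x \<in> pr ` ?C" using xC by simp
      show "\<forall>y\<in>pr ` ?C. ?Q\<^sup>*\<^sup>* (pr x) y"
      proof
        fix y assume "y \<in> pr ` ?C"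
        then obtain z where z: "z \<in> ?C" "y = pr z" by auto
        have "?RA\<^sup>*\<^sup>* x z" using z unfolding cluster_def by simp
        then have "?Q\<^sup>*\<^sup>* (pr x) (pr z)"
        proof (induction rule: rtranclp_induct)
          case base then show ?case by simp
        next
          case (step y z)
          have "y \<in> ?C" "z \<in> ?C" using step unfolding cluster_def by (auto intro: rtranclp.rtrancl_into_rtrancl)
          moreover have "nn L y z" using step(2) by simp
          then have "cd L (pr y) (pr z) \<le> 1" using pr(1) by blast
          ultimately have q: "?Q (pr y) (pr z)" by blast
          show ?case by (rule rtranclp.rtrancl_into_rtrancl[of ?Q, OF step(3) q])
        qed
        then show "?Q\<^sup>*\<^sup>* (pr x) y" using z by simp
      qed
    qed
  qed
  have pf: "conn L (fst ` ?C) \<and> fst ` ?C \<subseteq> {..<L}"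
    by (rule proj) (auto dest: nn_cd simp: Lam_def)
  have ps: "conn L (snd ` ?C) \<and> snd ` ?C \<subseteq> {..<L}"
    by (rule proj) (auto dest: nn_cd simp: Lam_def)
  have ne: "?C \<noteq> {}" using xC by blast
  have "is_arc L (fst ` ?C)" "is_arc L (snd ` ?C)" using conn_arc[OF L] pf ps ne by auto
  then have "is_circ L ?C (fst ` ?C \<times> snd ` ?C)" using circ_of ne by blast
  moreover have "fst x \<in> fst ` ?C" "snd x \<in> snd ` ?C" using xC by auto
  then have "x \<in> fst ` ?C \<times> snd ` ?C" by (simp add: mem_Times_iff)
  ultimately show ?thesis by blast
qed

lemma reach_inv:
  assumes L: "0 < L" and A: "A \<subseteq> Lam L" and r: "(merge_step L)\<^sup>*\<^sup>* (init_rects L A) F"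
  shows "(\<forall>R\<in>F. is_rect L R) \<and> (\<forall>x\<in>A. \<exists>R\<in>F. x \<in> R)"
  using r
proof (induction rule: rtranclp_induct)
  case base
  show ?case
  proof
    show "\<forall>R\<in>init_rects L A. is_rect L R" unfolding init_rects_def is_circ_def by auto
    show "\<forall>x\<in>A. \<exists>R\<in>init_rects L A. x \<in> R"
      using cluster_circ[OF L A] unfolding init_rects_def by blast
  qed
next
  case (step F F')
  then obtain R1 R2 R where m: "R1 \<in> F" "R2 \<in> F" "is_circ L (R1 \<union> R2) R" "F' = insert R (F - {R1, R2})"
    unfolding merge_step_def by blast
  show ?case
  proof
    show "\<forall>R\<in>F'. is_rect L R" using m step.IH unfolding is_circ_def by auto
    show "\<forall>x\<in>A. \<exists>R\<in>F'. x \<in> R"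
    proof
      fix x assume "x \<in> A"
      then obtain Q where Q: "Q \<in> F" "x \<in> Q" using step.IH by blast
      show "\<exists>R\<in>F'. x \<in> R"
      proof (cases "Q = R1 \<or> Q = R2")
        case True then have "x \<in> R" using m Q unfolding is_circ_def by blast
        then show ?thesis using m by blast
      next
        case False then show ?thesis using m Q by blast
      qed
    qed
  qed
qed

lemma final_exists:
  assumes L: "0 < L" and A: "A \<subseteq> Lam L"
  shows "\<exists>F. bootstrap_final L A F"
proof -
  let ?Re = "\<lambda>F. (merge_step L)\<^sup>*\<^sup>* (init_rects L A) F"
  have fin: "finite F" if "?Re F" for F
  proof -
    have "F \<subseteq> Pow (Lam L)" using reach_inv[OF L A that] rect_sub[OF L] by blast
    moreover have "finite (Lam L)" unfolding Lam_def by simp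
    ultimately show ?thesis by (meson finite_Pow_iff finite_subset)
  qed
  define n where "n = (LEAST n. \<exists>F. ?Re F \<and> card F = n)"
  have "\<exists>F. ?Re F \<and> card F = n" unfolding n_def by (rule LeastI_ex) blast
  then obtain F where F: "?Re F" "card F = n" by blast
  have least: "n \<le> card F'" if "?Re F'" for F' unfolding n_def by (rule Least_le) (use that in blast)
  have "\<forall>R1\<in>F. \<forall>R2\<in>F. R1 \<noteq> R2 \<longrightarrow> \<not> close L R1 R2"
  proof (intro ballI impI notI)
    fix R1 R2 assume R: "R1 \<in> F" "R2 \<in> F" "R1 \<noteq> R2" "close L R1 R2"
    have rr: "is_rect L R1" "is_rect L R2" using reach_inv[OF L A F(1)] R by auto
    obtain R where R0: "is_circ L (R1 \<union> R2) R" using merge_circ[OF L rr R(4)] by blast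
    define F' where "F' = insert R (F - {R1, R2})"
    have "merge_step L F F'" unfolding merge_step_def F'_def using R R0 by blast
    then have Re': "?Re F'" using F(1) by (meson rtranclp.rtrancl_into_rtrancl)
    have fF: "finite F" using fin F(1) .
    have c2: "card (F - {R1, R2}) = card F - 2" using R fF by (simp add: card_Diff_subset)
    have "card {R1,R2} = 2" using R(3) by simp
    moreover have "card {R1,R2} \<le> card F" using R fF by (intro card_mono) auto
    ultimately have g2: "card F \<ge> 2" by simp
    have "card F' \<le> Suc (card (F - {R1,R2}))" unfolding F'_def using fF by (simp add: card_insert_if)
    then have "card F' < card F" using c2 g2 by arith
    then show False using least[OF Re'] F(2) by simp
  qed
  then show ?thesis unfolding bootstrap_final_def using F by blast
qed

lemma CB_props:
  assumes L: "0 < L" and A: "A \<subseteq> Lam L"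
  shows "bootstrap_final L A (CB L A)" "\<forall>x\<in>A. \<exists>R\<in>CB L A. x \<in> R"
proof -
  show b: "bootstrap_final L A (CB L A)" unfolding CB_def using final_exists[OF L A] by (rule someI_ex)
  show "\<forall>x\<in>A. \<exists>R\<in>CB L A. x \<in> R" using reach_inv[OF L A] b unfolding bootstrap_final_def by blast
qed


definition stp :: "nat \<Rightarrow> bool \<Rightarrow> nat \<times> nat \<Rightarrow> nat \<Rightarrow> nat \<times> nat" where
  "stp L d x k = (if d then ((fst x + k) mod L, snd x) else (fst x, (snd x + k) mod L))"

definition prj :: "bool \<Rightarrow> nat \<times> nat \<Rightarrow> nat" where
  "prj d x = (if d then fst x else snd x)"

definition bd :: "nat \<Rightarrow> (nat \<times> nat) set \<Rightarrow> (nat \<times> nat) set set" where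
  "bd L A = {e \<in> edges L. \<exists>u\<in>e. \<exists>v\<in>e. u \<in> A \<and> v \<notin> A}"

lemma finite_Lam: "finite (Lam L)" unfolding Lam_def by simp

lemma arc_fin: "finite (arc L a w)"
proof -
  have "arc L a w = (\<lambda>i. (a+i) mod L) ` {..<w}" unfolding arc_def by auto
  then show ?thesis by simp
qed

lemma stp_add: "stp L d (stp L d x a) b = stp L d x (a+b)"
  unfolding stp_def by (simp add: mod_add_left_eq add.assoc)

lemma stp_Lam: "0 < L \<Longrightarrow> x \<in> Lam L \<Longrightarrow> stp L d x k \<in> Lam L"
  unfolding stp_def Lam_def by auto

lemma stp_mult: "x \<in> Lam L \<Longrightarrow> stp L d x (L * s) = x"
  unfolding stp_def Lam_def by auto

lemma stp_0: "x \<in> Lam L \<Longrightarrow> stp L d x 0 = x"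
  using stp_mult[of x L d 0] by simp

lemma prj_stp: "prj d (stp L d x k) = (prj d x + k) mod L"
  unfolding stp_def prj_def by auto

lemma cd_succ: assumes "3 \<le> L" "c < L" shows "cd L c ((c+1) mod L) = 1"
proof (cases "c + 1 < L")
  case True
  then have "(c+1) mod L = c+1" by simp
  moreover have "(c + L - (c+1)) mod L = L - 1" using assms by simp
  moreover have "(c + 1 + L - c) mod L = 1"
  proof -
    have "c + 1 + L - c = 1 + L" by simp
    then show ?thesis using assms by (simp add: mod_Suc)
  qed
  ultimately show ?thesis unfolding cd_def using assms by simp
next
  case False
  then have cL: "c + 1 = L" using assms by simp
  then have "(c+1) mod L = 0" by simp
  moreover have "(c + L - 0) mod L = c" using assms by simp
  moreover have "L - c = 1" using cL by simp
  then have "(0 + L - c) mod L = 1" using assms by simp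
  ultimately show ?thesis unfolding cd_def using cL assms by simp
qed

lemma cd_pred: assumes "3 \<le> L" "c < L" shows "cd L c ((c + (L-1)) mod L) = 1"
proof -
  define c' where "c' = (c + (L-1)) mod L"
  have c'L: "c' < L" using assms by (simp add: c'_def)
  have "(c' + 1) mod L = (c + (L-1) + 1) mod L" unfolding c'_def by (simp only: mod_add_left_eq)
  also have "c + (L-1) + 1 = c + L" using assms by simp
  finally have "c = (c' + 1) mod L" using assms by simp
  then show ?thesis using cd_succ[OF assms(1) c'L] cd_sym unfolding c'_def by metis
qed

lemma nn_stp:
  assumes "3 \<le> L" "x \<in> Lam L" "s = 1 \<or> s = L - 1"
  shows "nn L x (stp L d x s)"
  using assms cd_succ[OF assms(1), of "fst x"] cd_succ[OF assms(1), of "snd x"]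
    cd_pred[OF assms(1), of "fst x"] cd_pred[OF assms(1), of "snd x"]
  unfolding nn_def stp_def Lam_def by auto

lemma stp_ne:
  assumes "3 \<le> L" "x \<in> Lam L" shows "stp L d x 1 \<noteq> stp L d x (L-1)"
proof -
  have ne: "(c+1) mod L \<noteq> (c + (L-1)) mod L" for c
  proof
    assume "(c+1) mod L = (c + (L-1)) mod L"
    then have "(c + (L-1)) mod L = (c+1) mod L" by simp
    then have "L dvd (c + (L-1)) - (c+1)" using assms(1) by (subst (asm) mod_eq_dvd_iff_nat) auto
    moreover have "(c + (L-1)) - (c+1) = L - 2" using assms(1) by simp
    ultimately have "L dvd L - 2" by simp
    moreover have "0 < L - 2" using assms(1) by simp
    ultimately have "L \<le> L - 2" using dvd_imp_le by blast
    then show False using assms(1) by simp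
  qed
  show ?thesis unfolding stp_def using ne by (auto simp: prod_eq_iff)
qed

lemma inj_walk:
  fixes L s c i i' :: nat
  assumes "coprime L s" "i < L" "i' < L" "(c + i * s) mod L = (c + i' * s) mod L"
  shows "i = i'"
proof -
  have *: "i = i'" if "i \<le> i'" "i' < L" "(c + i * s) mod L = (c + i' * s) mod L" for i i' :: nat
  proof -
    have le: "c + i * s \<le> c + i' * s" using mult_le_mono1[OF that(1), of s] by simp
    have "(c + i' * s) mod L = (c + i * s) mod L" using that by simp
    then have "L dvd (c + i' * s) - (c + i * s)" using mod_eq_dvd_iff_nat[OF le] by blast
    moreover have "(c + i' * s) - (c + i * s) = (i' - i) * s" by (simp add: diff_mult_distrib)
    ultimately have "L dvd (i' - i)" using assms(1) coprime_dvd_mult_left_iff by metis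
    moreover have "i' - i < L" using that by simp
    ultimately have "i' - i = 0" by (metis dvd_imp_le not_less neq0_conv)
    then show ?thesis using that by simp
  qed
  show ?thesis using *[of i i'] *[of i' i] assms by (cases "i \<le> i'") auto
qed


definition blk :: "(nat \<times> nat) set set \<Rightarrow> nat \<times> nat \<Rightarrow> (nat \<times> nat) set" where
  "blk F x = (SOME R. R \<in> F \<and> x \<in> R)"

definition dir :: "nat \<Rightarrow> nat \<Rightarrow> (nat \<times> nat) set set \<Rightarrow> nat \<times> nat \<Rightarrow> bool" where
  "dir L lc F x = (\<exists>a w. w \<le> lc - 1 \<and> fst ` blk F x \<subseteq> arc L a w)"

locale good =
  fixes L lc :: nat and A :: "(nat \<times> nat) set" and F :: "(nat \<times> nat) set set"
  assumes L3: "3 \<le> L" and lc2: "2 \<le> lc" and lcL: "lc \<le> L" and AL: "A \<subseteq> Lam L"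
    and cov: "\<forall>x\<in>A. \<exists>R\<in>F. x \<in> R"
    and sep: "\<forall>R1\<in>F. \<forall>R2\<in>F. R1 \<noteq> R2 \<longrightarrow> \<not> close L R1 R2"
    and fit: "\<forall>R\<in>F. fits L lc R"
begin

lemma blk_in: "x \<in> A \<Longrightarrow> blk F x \<in> F \<and> x \<in> blk F x"
  unfolding blk_def using cov by (metis (mono_tags, lifting) someI_ex)

lemma blk_eq: assumes "u \<in> A" "v \<in> A" "nn L u v" shows "blk F u = blk F v"
proof (rule ccontr)
  assume ne: "blk F u \<noteq> blk F v"
  have "close L (blk F u) (blk F v)"
    unfolding close_def using blk_in assms nn_cd by blast
  then show False using sep ne blk_in assms by blast
qed

lemma short:
  assumes "x \<in> A"
  shows "\<exists>a w. w \<le> lc - 1 \<and> prj (dir L lc F x) ` blk F x \<subseteq> arc L a w"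
proof (cases "dir L lc F x")
  case True then show ?thesis unfolding dir_def prj_def by auto
next
  case False
  obtain a b w v where f: "blk F x \<subseteq> arc L a w \<times> arc L b v"
    "(w \<le> lc - 1 \<and> v \<le> lc) \<or> (w \<le> lc \<and> v \<le> lc - 1)"
    using fit blk_in[OF assms] unfolding fits_def by blast
  have "fst ` blk F x \<subseteq> arc L a w" using f(1) by auto
  then have "v \<le> lc - 1" using False f(2) unfolding dir_def by blast
  moreover have "snd ` blk F x \<subseteq> arc L b v" using f(1) by auto
  ultimately show ?thesis using False unfolding prj_def by auto
qed

lemma walk:
  assumes x: "x \<in> A" and s: "s = 1 \<or> s = L - 1"
  defines "d \<equiv> dir L lc F x"
  shows "\<exists>j<lc-1. stp L d x (j * s) \<in> A \<and> stp L d x ((j+1) * s) \<notin> A \<and> blk F (stp L d x (j * s)) = blk F x"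
proof -
  have L0: "0 < L" using L3 by simp
  have xL: "x \<in> Lam L" using x AL by auto
  have cop: "coprime L s"
  proof (cases "s = 1")
    case True then show ?thesis by simp
  next
    case False then have "s = L - 1" using s by simp
    then show ?thesis using coprime_diff_one_right_nat[OF L0] by simp
  qed
  have chain: "(\<forall>i'\<le>i. stp L d x (i' * s) \<in> A) \<longrightarrow> blk F (stp L d x (i * s)) = blk F x" for i
  proof (induction i)
    case 0 then show ?case using stp_0[OF xL] by simp
  next
    case (Suc i)
    show ?case
    proof
      assume all: "\<forall>i'\<le>Suc i. stp L d x (i' * s) \<in> A"
      then have IH: "blk F (stp L d x (i * s)) = blk F x" using Suc by simp
      have eq: "stp L d x (Suc i * s) = stp L d (stp L d x (i * s)) s" by (simp add: stp_add add.commute)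
      have "nn L (stp L d x (i * s)) (stp L d x (Suc i * s))"
        unfolding eq using nn_stp[OF L3 stp_Lam[OF L0 xL] s] .
      moreover have "stp L d x (i * s) \<in> A" "stp L d x (Suc i * s) \<in> A" using all by auto
      ultimately have "blk F (stp L d x (i * s)) = blk F (stp L d x (Suc i * s))"
        using blk_eq by blast
      then show "blk F (stp L d x (Suc i * s)) = blk F x" using IH by simp
    qed
  qed
  have notall: "\<exists>i<lc. stp L d x (i * s) \<notin> A"
  proof (rule ccontr)
    assume "\<not> ?thesis"
    then have allA: "\<forall>i<lc. stp L d x (i * s) \<in> A" by simp
    obtain a w where aw: "w \<le> lc - 1" "prj d ` blk F x \<subseteq> arc L a w" using short[OF x] unfolding d_def by blast
    have "(\<lambda>i. (prj d x + i * s) mod L) ` {..<lc} \<subseteq> arc L a w"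
    proof
      fix y assume "y \<in> (\<lambda>i. (prj d x + i * s) mod L) ` {..<lc}"
      then obtain i where i: "i < lc" "y = (prj d x + i * s) mod L" by blast
      have "\<forall>i'\<le>i. stp L d x (i' * s) \<in> A" using allA i by auto
      then have "blk F (stp L d x (i * s)) = blk F x" using chain[of i] by blast
      moreover have "stp L d x (i * s) \<in> blk F (stp L d x (i * s))" using blk_in allA i by blast
      ultimately have "stp L d x (i * s) \<in> blk F x" by simp
      then have "prj d (stp L d x (i * s)) \<in> arc L a w" using aw by blast
      moreover have "prj d (stp L d x (i * s)) = (prj d x + i * s) mod L" by (rule prj_stp)
      ultimately show "y \<in> arc L a w" using i(2) by simp
    qed
    moreover have "inj_on (\<lambda>i. (prj d x + i * s) mod L) {..<lc}"
    proof (rule inj_onI)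
      fix i i' assume ii: "i \<in> {..<lc}" "i' \<in> {..<lc}" "(prj d x + i * s) mod L = (prj d x + i' * s) mod L"
      have "i < L" "i' < L" using ii(1,2) lcL by auto
      then show "i = i'" using inj_walk[OF cop _ _ ii(3)] by blast
    qed
    then have "card ((\<lambda>i. (prj d x + i * s) mod L) ` {..<lc}) = lc" by (simp add: card_image)
    moreover note card_mono[OF arc_fin \<open>(\<lambda>i. (prj d x + i * s) mod L) ` {..<lc} \<subseteq> arc L a w\<close>]
    ultimately have "card {..<lc} \<le> card (arc L a w)" by simp
    then show False using card_arc[of L a w] aw lc2 by simp
  qed
  define i0 where "i0 = (LEAST i. stp L d x (i * s) \<notin> A)"
  obtain i1 where i1: "i1 < lc" "stp L d x (i1 * s) \<notin> A" using notall by blast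
  have i0: "stp L d x (i0 * s) \<notin> A" unfolding i0_def by (rule LeastI[of _ i1]) (rule i1(2))
  have "i0 \<le> i1" unfolding i0_def by (rule Least_le) (rule i1(2))
  then have i0lc: "i0 < lc" using i1 by simp
  have below: "stp L d x (i * s) \<in> A" if "i < i0" for i using not_less_Least that unfolding i0_def by blast
  have i00: "i0 \<noteq> 0"
  proof
    assume "i0 = 0" then have "stp L d x (i0 * s) = x" using stp_0[OF xL] by simp
    then show False using i0 x by simp
  qed
  define j where "j = i0 - 1"
  have j: "j < lc - 1" "i0 = j + 1" using i0lc i00 unfolding j_def by auto
  have "\<forall>i'\<le>j. stp L d x (i' * s) \<in> A" using below j by auto
  then have b: "blk F (stp L d x (j * s)) = blk F x" using chain[of j] by blast
  have "stp L d x (j * s) \<in> A" using \<open>\<forall>i'\<le>j. stp L d x (i' * s) \<in> A\<close> by simp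
  moreover have "stp L d x ((j+1) * s) \<notin> A" using i0 j(2) by simp
  ultimately show ?thesis using j(1) b by blast
qed

definition RE :: "nat \<Rightarrow> (nat \<times> nat) set" where
  "RE s = {e \<in> A. stp L (dir L lc F e) e s \<notin> A}"

lemma dir_eq: "blk F u = blk F v \<Longrightarrow> dir L lc F u = dir L lc F v"
  unfolding dir_def by simp

lemma card_RE:
  assumes s: "s = 1 \<or> s = L - 1"
  shows "card A \<le> card (RE s) * (lc - 1)"
proof -
  have L0: "0 < L" using L3 by simp
  let ?g = "\<lambda>(e, j). stp L (dir L lc F e) e ((L - j) * s)"
  have "A \<subseteq> ?g ` (RE s \<times> {..<lc-1})"
  proof
    fix x assume x: "x \<in> A"
    define d where "d = dir L lc F x"
    obtain j where j: "j < lc-1" "stp L d x (j * s) \<in> A" "stp L d x ((j+1) * s) \<notin> A"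
      "blk F (stp L d x (j * s)) = blk F x"
      using walk[OF x s] unfolding d_def by blast
    define e where "e = stp L d x (j * s)"
    have "dir L lc F (stp L d x (j * s)) = dir L lc F x" by (rule dir_eq[OF j(4)])
    then have de: "dir L lc F e = d" unfolding e_def by (simp add: d_def)
    have js: "(j+1) * s = j * s + s" by simp
    have "stp L d e s = stp L d x ((j+1) * s)" unfolding e_def js by (rule stp_add)
    then have "stp L (dir L lc F e) e s \<notin> A" using j(3) de by simp
    moreover have "e \<in> A" using j(2) e_def by simp
    ultimately have eR: "e \<in> RE s" unfolding RE_def by blast
    have jL: "j * s + (L-j) * s = L * s"
    proof -
      have "j + (L - j) = L" using j lcL by simp
      then show ?thesis by (metis add_mult_distrib)
    qed
    have xL: "x \<in> Lam L" using x AL by blast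
    have "stp L d e ((L - j) * s) = stp L d x (j * s + (L-j) * s)" unfolding e_def by (rule stp_add)
    also have "\<dots> = stp L d x (L * s)" by (simp only: jL)
    also have "\<dots> = x" by (rule stp_mult[OF xL])
    finally have geq: "?g (e, j) = x" using de by simp
    have mem: "(e, j) \<in> RE s \<times> {..<lc-1}" using eR j(1) by simp
    show "x \<in> ?g ` (RE s \<times> {..<lc-1})" by (rule rev_image_eqI[OF mem]) (rule sym[OF geq])
  qed
  moreover have "RE s \<subseteq> Lam L" using AL unfolding RE_def by blast
  then have fRE: "finite (RE s)" using finite_subset[OF _ finite_Lam] by blast
  ultimately have "card A \<le> card (?g ` (RE s \<times> {..<lc-1}))"
    by (intro card_mono) (simp_all)
  also have "\<dots> \<le> card (RE s \<times> {..<lc-1})" by (rule card_image_le) (use fRE in auto)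
  also have "\<dots> = card (RE s) * (lc - 1)" by (simp add: card_cartesian_product)
  finally show ?thesis .
qed

end


lemma nn_ne: "nn L u v \<Longrightarrow> u \<noteq> v"
  unfolding nn_def by auto

lemma edges_fin: "finite (edges L)"
proof -
  have "edges L \<subseteq> Pow (Lam L)" unfolding edges_def by auto
  then show ?thesis using finite_Lam by (meson finite_Pow_iff finite_subset)
qed

lemma bd_fin: "finite (bd L A)"
  using edges_fin[of L] unfolding bd_def by (rule finite_subset[rotated]) auto

context good begin

lemma RE_edge:
  assumes s: "s = 1 \<or> s = L - 1" and e: "e \<in> RE s"
  shows "{e, stp L (dir L lc F e) e s} \<in> bd L A"
proof -
  have L0: "0 < L" using L3 by simp
  have eA: "e \<in> A" "stp L (dir L lc F e) e s \<notin> A" using e unfolding RE_def by auto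
  have eL: "e \<in> Lam L" using eA AL by blast
  have "stp L (dir L lc F e) e s \<in> Lam L" by (rule stp_Lam[OF L0 eL])
  moreover have "nn L e (stp L (dir L lc F e) e s)" by (rule nn_stp[OF L3 eL s])
  ultimately have "{e, stp L (dir L lc F e) e s} \<in> edges L" unfolding edges_def using eL by blast
  then show ?thesis unfolding bd_def using eA by blast
qed

lemma card_bd: "2 * card A \<le> (lc - 1) * card (bd L A)"
proof -
  have L0: "0 < L" using L3 by simp
  define g where "g s e = {e, stp L (dir L lc F e) e s}" for s e
  have s1: "(1::nat) = 1 \<or> (1::nat) = L - 1" by simp
  have s2: "L - 1 = 1 \<or> L - 1 = L - 1" by simp
  have inj: "inj_on (g s) (RE s)" for s
  proof (rule inj_onI)
    fix e e' assume ee: "e \<in> RE s" "e' \<in> RE s" "g s e = g s e'"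
    have "e \<in> g s e'" using ee(3) unfolding g_def by auto
    moreover have "e \<in> A" "stp L (dir L lc F e') e' s \<notin> A" using ee unfolding RE_def by auto
    ultimately show "e = e'" unfolding g_def by auto
  qed
  have sub: "g s ` RE s \<subseteq> bd L A" if "s = 1 \<or> s = L - 1" for s
    using RE_edge[OF that] unfolding g_def by blast
  have disj: "g 1 ` RE 1 \<inter> g (L-1) ` RE (L-1) = {}"
  proof (rule ccontr)
    assume "\<not> ?thesis"
    then obtain e e' where ee: "e \<in> RE 1" "e' \<in> RE (L-1)" "g 1 e = g (L-1) e'" by blast
    have eA: "e \<in> A" "e' \<in> A" "stp L (dir L lc F e') e' (L-1) \<notin> A" using ee unfolding RE_def by auto
    have "e \<in> g (L-1) e'" using ee(3) unfolding g_def by auto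
    then have "e = e'" using eA unfolding g_def by auto
    have eL: "e \<in> Lam L" using eA AL by blast
    let ?d = "dir L lc F e"
    have "stp L ?d e 1 \<in> g (L-1) e" using ee(3) \<open>e = e'\<close> unfolding g_def by auto
    moreover have "stp L ?d e 1 \<noteq> e" using nn_ne[OF nn_stp[OF L3 eL s1]] by metis
    moreover have "stp L ?d e 1 \<noteq> stp L ?d e (L-1)" by (rule stp_ne[OF L3 eL])
    ultimately show False unfolding g_def by auto
  qed
  have fB: "finite (bd L A)" by (rule bd_fin)
  have "card (g 1 ` RE 1 \<union> g (L-1) ` RE (L-1)) \<le> card (bd L A)"
    using sub[OF s1] sub[OF s2] fB by (intro card_mono) auto
  moreover have "card (g 1 ` RE 1 \<union> g (L-1) ` RE (L-1)) = card (g 1 ` RE 1) + card (g (L-1) ` RE (L-1))"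
    using disj fB sub[OF s1] sub[OF s2] by (intro card_Un_disjoint) (auto intro: finite_subset)
  moreover have "card (g s ` RE s) = card (RE s)" for s using inj by (rule card_image)
  ultimately have B: "card (RE 1) + card (RE (L-1)) \<le> card (bd L A)" by simp
  have "card A \<le> card (RE 1) * (lc - 1)" "card A \<le> card (RE (L-1)) * (lc - 1)"
    using card_RE[OF s1] card_RE[OF s2] by auto
  then have "2 * card A \<le> (card (RE 1) + card (RE (L-1))) * (lc - 1)" by (simp add: add_mult_distrib)
  also have "\<dots> \<le> card (bd L A) * (lc - 1)" using B by (rule mult_le_mono1)
  finally show ?thesis by (simp add: mult.commute)
qed

end


lemma energy_S:
  assumes "3 \<le> L" "2 \<le> lc" "lc \<le> L" "A \<in> Sset L lc"
  shows "2 * card A \<le> (lc - 1) * card (bd L A)"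
proof -
  have L0: "0 < L" using assms by simp
  have AL: "A \<subseteq> Lam L" using assms(4) unfolding Sset_def Xs_def by auto
  have sc: "subcritical L lc (CB L A)" using assms(4) unfolding Sset_def by auto
  have fin: "bootstrap_final L A (CB L A)" and cov: "\<forall>x\<in>A. \<exists>R\<in>CB L A. x \<in> R"
    using CB_props[OF L0 AL] by auto
  interpret good L lc A "CB L A"
    using assms AL cov fin sc unfolding good_def bootstrap_final_def subcritical_def by auto
  show ?thesis by (rule card_bd)
qed

lemma edge_form: "e \<in> edges L \<Longrightarrow> \<exists>x y. e = {x, y} \<and> x \<noteq> y"
  unfolding edges_def using nn_ne by blast

lemma prod_edge:
  assumes "e \<in> edges L"
  shows "(\<Prod>z\<in>e. spin A z) = (if e \<in> bd L A then -1 else 1)"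
proof -
  obtain x y where xy: "e = {x, y}" "x \<noteq> y" using edge_form[OF assms] by blast
  have p: "(\<Prod>z\<in>e. spin A z) = spin A x * spin A y" using xy by simp
  have b: "(e \<in> bd L A) = ((x \<in> A) \<noteq> (y \<in> A))" unfolding bd_def using assms xy by auto
  show ?thesis unfolding p b by (auto simp: spin_def)
qed

lemma sum_if_card:
  assumes "finite S" "B \<subseteq> S"
  shows "(\<Sum>e\<in>S. if e \<in> B then (a::real) else b) = a * real (card B) + b * real (card S - card B)"
proof -
  have "(\<Sum>e\<in>S. if e \<in> B then a else b) = (\<Sum>e\<in>S \<inter> {e. e \<in> B}. a) + (\<Sum>e\<in>S \<inter> - {e. e \<in> B}. b)"
    by (rule sum.If_cases[OF assms(1)])
  also have "S \<inter> {e. e \<in> B} = B" using assms by auto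
  also have "S \<inter> - {e. e \<in> B} = S - B" by auto
  finally have "(\<Sum>e\<in>S. if e \<in> B then a else b) = a * real (card B) + b * real (card (S - B))" by (simp add: mult.commute)
  also have "card (S - B) = card S - card B" using assms by (simp add: card_Diff_subset finite_subset)
  finally show ?thesis .
qed

lemma sum_edges: "(\<Sum>e\<in>edges L. \<Prod>x\<in>e. spin A x) = real (card (edges L)) - 2 * real (card (bd L A))"
proof -
  have e1: "(\<Sum>e\<in>edges L. \<Prod>x\<in>e. spin A x) = (\<Sum>e\<in>edges L. if e \<in> bd L A then -1 else 1)"
    by (rule sum.cong) (auto simp: prod_edge)
  have bsub: "bd L A \<subseteq> edges L" unfolding bd_def by auto
  have cb: "card (bd L A) \<le> card (edges L)" by (rule card_mono[OF edges_fin bsub])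
  show ?thesis unfolding e1 sum_if_card[OF edges_fin bsub] using cb by (simp add: of_nat_diff)
qed

lemma Ham_diff:
  assumes "A \<subseteq> Lam L"
  shows "Ham L J h A - Ham L J h {} = J * real (card (bd L A)) - h * real (card A)"
proof -
  have bd0: "bd L {} = {}" unfolding bd_def by auto
  have e0: "(\<Sum>e\<in>edges L. \<Prod>x\<in>e. spin {} x) = real (card (edges L))"
    using sum_edges[where L=L and A="{}"] unfolding bd0 by simp
  have ca: "card A \<le> card (Lam L)" by (rule card_mono[OF finite_Lam assms])
  have s1: "(\<Sum>x\<in>Lam L. spin A x) = 2 * real (card A) - real (card (Lam L))"
  proof -
    have "(\<Sum>x\<in>Lam L. spin A x) = (\<Sum>x\<in>Lam L. if x \<in> A then 1 else -1)" unfolding spin_def by simp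
    also have "\<dots> = 1 * real (card A) + (-1) * real (card (Lam L) - card A)" by (rule sum_if_card[OF finite_Lam assms])
    finally show ?thesis using ca by (simp add: of_nat_diff)
  qed
  have s0: "(\<Sum>x\<in>Lam L. spin {} x) = - real (card (Lam L))" unfolding spin_def by simp
  show ?thesis unfolding Ham_def sum_edges[where L=L and A=A] e0 s1 s0 by (simp add: algebra_simps)
qed


lemma empty_S: assumes "0 < L" shows "{} \<in> Sset L lc"
proof -
  have b: "bootstrap_final L {} (CB L {})" using CB_props[OF assms] by auto
  have i: "init_rects L {} = {}" unfolding init_rects_def by auto
  have "(merge_step L)\<^sup>*\<^sup>* {} F \<Longrightarrow> F = {}" for F
    by (induction rule: rtranclp_induct) (auto simp: merge_step_def)
  then have "CB L {} = {}" using b i unfolding bootstrap_final_def by auto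
  then show ?thesis unfolding Sset_def Xs_def subcritical_def by auto
qed

lemma circ_unique: "is_circ L S R \<Longrightarrow> is_circ L S R' \<Longrightarrow> R = R'"
  unfolding is_circ_def by blast

lemma arc_single: "c < L \<Longrightarrow> arc L c 1 = {c}"
  unfolding arc_def by auto

lemma is_arc_single: "c < L \<Longrightarrow> is_arc L {c}"
  unfolding is_arc_def using arc_single by (intro exI[of _ c] exI[of _ 1]) auto

lemma cd_even:
  assumes "i < L div 2" "i' < L div 2" "i \<noteq> i'"
  shows "2 \<le> cd L (2*i) (2*i')"
proof -
  have h: "2 * (L div 2) \<le> L" by simp
  have l: "2*i < L" "2*i' < L" using assms h by linarith+
  have c: "cd L (2*i) (2*i') = min (if 2*i' \<le> 2*i then 2*i - 2*i' else 2*i + L - 2*i') (if 2*i \<le> 2*i' then 2*i' - 2*i else 2*i' + L - 2*i)"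
    by (rule cd_eq[OF l])
  show ?thesis
  proof (cases "i < i'")
    case True
    then have "\<not> 2*i' \<le> 2*i" "2*i \<le> 2*i'" by auto
    then have "cd L (2*i) (2*i') = min (2*i + L - 2*i') (2*i' - 2*i)" unfolding c by simp
    moreover have "2 \<le> 2*i + L - 2*i'" using assms h True by linarith
    moreover have "2 \<le> 2*i' - 2*i" using True by linarith
    ultimately show ?thesis by simp
  next
    case False
    then have F: "i' < i" using assms by simp
    then have "2*i' \<le> 2*i" "\<not> 2*i \<le> 2*i'" by auto
    then have "cd L (2*i) (2*i') = min (2*i - 2*i') (2*i' + L - 2*i)" unfolding c by simp
    moreover have "2 \<le> 2*i' + L - 2*i" using assms h F by linarith
    moreover have "2 \<le> 2*i - 2*i'" using F by linarith
    ultimately show ?thesis by simp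
  qed
qed

definition A0 :: "nat \<Rightarrow> (nat \<times> nat) set" where
  "A0 L = (\<lambda>(i, j). (2*i, 2*j)) ` ({..<L div 2} \<times> {..<L div 2})"

lemma A0_card: "card (A0 L) = (L div 2) * (L div 2)"
proof -
  have "inj_on (\<lambda>(i, j). (2*i, 2*j)) ({..<L div 2} \<times> {..<L div 2})"
    by (rule inj_onI) auto
  then show ?thesis unfolding A0_def by (simp add: card_image card_cartesian_product)
qed

lemma A0_far:
  assumes "p \<in> A0 L" "q \<in> A0 L" "p \<noteq> q"
  shows "\<not> (cd L (fst p) (fst q) \<le> 1 \<and> cd L (snd p) (snd q) \<le> 1)"
proof -
  obtain i j where p: "p = (2*i, 2*j)" "i < L div 2" "j < L div 2" using assms(1) unfolding A0_def by auto
  obtain i' j' where q: "q = (2*i', 2*j')" "i' < L div 2" "j' < L div 2" using assms(2) unfolding A0_def by auto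
  show ?thesis
  proof (cases "i = i'")
    case True
    then have "j \<noteq> j'" using assms(3) p q by auto
    then have "2 \<le> cd L (2*j) (2*j')" using cd_even p q by blast
    then show ?thesis using p q by auto
  next
    case False
    then have "2 \<le> cd L (2*i) (2*i')" using cd_even p q by blast
    then show ?thesis using p q by auto
  qed
qed

lemma A0_Lam: "A0 L \<subseteq> Lam L"
proof
  fix p assume "p \<in> A0 L"
  then obtain i j where p: "p = (2*i, 2*j)" "i < L div 2" "j < L div 2" unfolding A0_def by auto
  have h: "2 * (L div 2) \<le> L" by simp
  have "2*i < L" "2*j < L" using p h by linarith+
  then show "p \<in> Lam L" unfolding Lam_def p by auto
qed

lemma A0_S:
  assumes L: "0 < L" and lc: "2 \<le> lc"
  shows "A0 L \<in> Sset L lc"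
proof -
  let ?A = "A0 L"
  have AL: "?A \<subseteq> Lam L" by (rule A0_Lam)
  have clu: "cluster L ?A p = {p}" if "p \<in> ?A" for p
  proof -
    let ?RA = "\<lambda>u v. u \<in> ?A \<and> v \<in> ?A \<and> nn L u v"
    have "?RA\<^sup>*\<^sup>* p y \<Longrightarrow> y = p" for y
    proof (induction rule: rtranclp_induct)
      case base then show ?case by simp
    next
      case (step y z)
      then have "y \<in> ?A" "z \<in> ?A" "nn L y z" by auto
      then show ?case using A0_far nn_cd nn_ne by blast
    qed
    then show ?thesis unfolding cluster_def by auto
  qed
  have single: "R = {p}" if "p \<in> ?A" "is_circ L (cluster L ?A p) R" for p R
  proof -
    have pl: "fst p < L" "snd p < L" using that AL unfolding Lam_def by auto
    have "is_circ L {p} (fst ` {p} \<times> snd ` {p})"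
      by (rule circ_of) (use is_arc_single pl in auto)
    moreover have "fst ` {p} \<times> snd ` {p} = {p}" by (cases p) auto
    ultimately have "is_circ L {p} {p}" by simp
    then show ?thesis using that clu circ_unique by metis
  qed
  have initS: "\<forall>R\<in>init_rects L ?A. \<exists>p\<in>?A. R = {p}" unfolding init_rects_def using single by blast
  have nostep: "\<not> merge_step L (init_rects L ?A) F'" for F'
  proof
    assume "merge_step L (init_rects L ?A) F'"
    then obtain R1 R2 where R: "R1 \<in> init_rects L ?A" "R2 \<in> init_rects L ?A" "R1 \<noteq> R2" "close L R1 R2"
      unfolding merge_step_def by blast
    obtain p q where pq: "p \<in> ?A" "q \<in> ?A" "R1 = {p}" "R2 = {q}" using R initS by metis
    then have "p \<noteq> q" "cd L (fst p) (fst q) \<le> 1 \<and> cd L (snd p) (snd q) \<le> 1" using R unfolding close_def by auto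
    then show False using A0_far[OF pq(1,2)] by blast
  qed
  have "(merge_step L)\<^sup>*\<^sup>* (init_rects L ?A) F \<Longrightarrow> F = init_rects L ?A" for F
    by (induction rule: rtranclp_induct) (use nostep in auto)
  moreover have "bootstrap_final L ?A (CB L ?A)" using CB_props[OF L AL] by auto
  ultimately have CBe: "CB L ?A = init_rects L ?A" unfolding bootstrap_final_def by auto
  have fp: "fits L lc {p}" if "p \<in> ?A" for p
  proof -
    have pl: "fst p < L" "snd p < L" using that AL unfolding Lam_def by auto
    have "{p} \<subseteq> arc L (fst p) 1 \<times> arc L (snd p) 1" unfolding arc_single[OF pl(1)] arc_single[OF pl(2)] by (simp add: mem_Times_iff)
    then show ?thesis unfolding fits_def using lc by (intro exI[of _ "fst p"] exI[of _ "snd p"] exI[of _ 1] exI[of _ 1]) auto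
  qed
  have "\<forall>R\<in>init_rects L ?A. fits L lc R"
  proof
    fix R assume "R \<in> init_rects L ?A"
    then obtain p where "p \<in> ?A" "R = {p}" using initS by blast
    then show "fits L lc R" using fp by simp
  qed
  then have "subcritical L lc (CB L ?A)" unfolding CBe subcritical_def .
  then show ?thesis unfolding Sset_def Xs_def using AL by auto
qed


lemma sum_Pow: "finite S \<Longrightarrow> (\<Sum>X\<in>Pow S. (y::real) ^ card X) = (y + 1) ^ card S"
  using prod_add[of S "\<lambda>_. y" "\<lambda>_. 1"] by simp

lemma pow_exp: "fb > 0 \<Longrightarrow> exp (- ln fb * real n) = (1/fb) ^ n"
proof -
  assume "fb > 0"
  have "exp (- ln fb * real n) = exp (real n * ln (1/fb))" by (simp add: ln_div mult.commute)
  also have "\<dots> = exp (ln (1/fb)) ^ n" by (rule exp_of_nat_mult)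
  also have "\<dots> = (1/fb) ^ n" using \<open>fb > 0\<close> by simp
  finally show ?thesis .
qed

lemma core:
  fixes J h \<beta> fb c :: real and L lc :: nat
  assumes J: "J > 0" and h: "h > 0" and L3: "3 \<le> L" and lc2: "2 \<le> lc" and lcL: "lc \<le> L"
    and cdef: "c = 2*J/real (lc-1) - h" and b0: "\<beta> > 0" and fb1: "fb > 1"
    and lnb: "ln fb \<le> \<beta> * c"
    and big: "real (card (Lam L)) / fb < real (card (A0 L))"
  shows "ln (gibbs L J h \<beta> (Sset L lc - Wset L lc fb) / gibbs L J h \<beta> (Sset L lc))
           \<le> real (card (Lam L)) / fb * (1 + ln fb - \<beta> * c)"
proof -
  have L0: "0 < L" using L3 by simp
  define S where "S = Sset L lc"
  define W where "W = Wset L lc fb"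
  define w where "w A = exp (- \<beta> * Ham L J h A)" for A
  define K where "K = real (card (Lam L)) / fb"
  define E where "E = exp (- (\<beta> * c - ln fb) * K)"
  have wpos: "w A > 0" for A unfolding w_def by simp
  have fX: "finite (Xs L)" unfolding Xs_def using finite_Lam by simp
  have SX: "S \<subseteq> Xs L" unfolding S_def Sset_def by auto
  have fS: "finite S" using finite_subset[OF SX fX] .
  have Z: "Zpart L J h \<beta> = (\<Sum>A\<in>Xs L. w A)" unfolding Zpart_def w_def ..
  have Zpos: "Zpart L J h \<beta> > 0" unfolding Z
    by (rule sum_pos2[OF fX, of "{}"]) (auto simp: Xs_def wpos less_imp_le)
  have g1: "gibbs L J h \<beta> (S - W) = (\<Sum>A\<in>S - W. w A) / Zpart L J h \<beta>"
  proof -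
    have "(S - W) \<inter> Xs L = S - W" using SX by auto
    then show ?thesis unfolding gibbs_def w_def by simp
  qed
  have g2: "gibbs L J h \<beta> S = (\<Sum>A\<in>S. w A) / Zpart L J h \<beta>"
  proof -
    have "S \<inter> Xs L = S" using SX by auto
    then show ?thesis unfolding gibbs_def w_def by simp
  qed
  have ratio: "gibbs L J h \<beta> (S - W) / gibbs L J h \<beta> S = (\<Sum>A\<in>S - W. w A) / (\<Sum>A\<in>S. w A)"
    unfolding g1 g2 using Zpos by (simp add: field_simps)
  have e0: "{} \<in> S" unfolding S_def by (rule empty_S[OF L0])
  have Sb: "w {} \<le> (\<Sum>A\<in>S. w A)" by (rule member_le_sum[OF e0]) (auto simp: fS wpos less_imp_le)
  have A0S: "A0 L \<in> S - W"
  proof -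
    have "A0 L \<in> S" unfolding S_def by (rule A0_S[OF L0 lc2])
    moreover have "A0 L \<notin> W" unfolding W_def Wset_def using big by auto
    ultimately show ?thesis by simp
  qed
  have SWpos: "(\<Sum>A\<in>S - W. w A) > 0"
    by (rule sum_pos2[of "S - W" "A0 L"]) (use fS A0S wpos in \<open>auto intro: less_imp_le\<close>)
  have lc1: "real (lc - 1) > 0" using lc2 by simp
  have ineq: "w A \<le> w {} * E * (1/fb) ^ card A" if A: "A \<in> S - W" for A
  proof -
    have AS: "A \<in> Sset L lc" using A unfolding S_def by simp
    have AL: "A \<subseteq> Lam L" using AS unfolding Sset_def Xs_def by auto
    have aK: "real (card A) > K" using A unfolding W_def Wset_def S_def K_def by auto
    have en: "2 * card A \<le> (lc - 1) * card (bd L A)" by (rule energy_S[OF L3 lc2 lcL AS])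
    then have "2 * real (card A) \<le> real (lc - 1) * real (card (bd L A))"
      by (metis of_nat_le_iff of_nat_mult of_nat_numeral)
    then have "2 * J * real (card A) \<le> J * (real (lc - 1) * real (card (bd L A)))" using J by simp
    then have "2 * J / real (lc - 1) * real (card A) \<le> J * real (card (bd L A))"
      using lc1 by (simp add: field_simps)
    then have hd: "c * real (card A) \<le> Ham L J h A - Ham L J h {}"
      unfolding Ham_diff[OF AL] cdef by (simp add: algebra_simps)
    have "w A = w {} * exp (- \<beta> * (Ham L J h A - Ham L J h {}))"
      unfolding w_def by (simp add: exp_add[symmetric] algebra_simps)
    also have "\<dots> \<le> w {} * exp (- \<beta> * (c * real (card A)))"
      using hd b0 wpos[of "{}"] by (intro mult_left_mono) (auto simp: less_imp_le)
    also have "exp (- \<beta> * (c * real (card A))) = exp (- (\<beta> * c - ln fb) * real (card A)) * exp (- ln fb * real (card A))"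
      by (simp add: exp_add[symmetric] algebra_simps)
    also have "exp (- (\<beta> * c - ln fb) * real (card A)) \<le> E"
    proof -
      have "(\<beta> * c - ln fb) * K \<le> (\<beta> * c - ln fb) * real (card A)"
        using lnb aK by (intro mult_left_mono) auto
      then have "- (\<beta> * c - ln fb) * real (card A) \<le> - (\<beta> * c - ln fb) * K"
        by (simp only: mult_minus_left)
      then show ?thesis unfolding E_def by (simp only: exp_le_cancel_iff)
    qed
    also have "exp (- ln fb * real (card A)) = (1/fb) ^ card A" by (rule pow_exp) (use fb1 in simp)
    finally show ?thesis using wpos[of "{}"] by (simp add: mult.assoc mult_left_mono)
  qed
  have "(\<Sum>A\<in>S - W. w A) \<le> (\<Sum>A\<in>S - W. w {} * E * (1/fb) ^ card A)"
    by (rule sum_mono) (rule ineq)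
  also have "\<dots> = w {} * E * (\<Sum>A\<in>S - W. (1/fb) ^ card A)" by (simp add: sum_distrib_left)
  also have "(\<Sum>A\<in>S - W. (1/fb) ^ card A) \<le> (\<Sum>A\<in>Pow (Lam L). (1/fb) ^ card A)"
    by (rule sum_mono2) (use SX fb1 in \<open>auto simp: Xs_def finite_Lam\<close>)
  also have "\<dots> = (1/fb + 1) ^ card (Lam L)" by (rule sum_Pow[OF finite_Lam])
  also have "\<dots> \<le> exp (1/fb) ^ card (Lam L)"
    by (rule power_mono) (use fb1 in \<open>auto simp: add.commute[of "1/fb"]\<close>)
  also have "exp (1/fb) ^ card (Lam L) = exp K" unfolding K_def
    by (simp add: exp_of_nat_mult[symmetric])
  finally have up: "(\<Sum>A\<in>S - W. w A) \<le> w {} * E * exp K"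
    using wpos[of "{}"] unfolding E_def by (simp add: mult_left_mono)
  have "(\<Sum>A\<in>S - W. w A) / (\<Sum>A\<in>S. w A) \<le> (\<Sum>A\<in>S - W. w A) / w {}"
    using Sb wpos[of "{}"] SWpos by (intro divide_left_mono) (auto simp: less_imp_le)
  also have "\<dots> \<le> E * exp K" using up wpos[of "{}"] by (simp add: field_simps)
  finally have r: "(\<Sum>A\<in>S - W. w A) / (\<Sum>A\<in>S. w A) \<le> exp (- (\<beta> * c - ln fb) * K + K)"
    unfolding E_def by (simp add: exp_add)
  have rpos: "(\<Sum>A\<in>S - W. w A) / (\<Sum>A\<in>S. w A) > 0"
    using SWpos Sb wpos[of "{}"] by simp
  have lnb2: "ln ((\<Sum>A\<in>S - W. w A) / (\<Sum>A\<in>S. w A)) \<le> - (\<beta> * c - ln fb) * K + K"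
  proof -
    have "ln ((\<Sum>A\<in>S - W. w A) / (\<Sum>A\<in>S. w A)) \<le> ln (exp (- (\<beta> * c - ln fb) * K + K))"
      using ln_le_cancel_iff[OF rpos exp_gt_zero] r by blast
    then show ?thesis by simp
  qed
  have X: "- (\<beta> * c - ln fb) * K + K = K * (1 + ln fb - \<beta> * c)" by (simp add: algebra_simps)
  have "ln (gibbs L J h \<beta> (S - W) / gibbs L J h \<beta> S) \<le> K * (1 + ln fb - \<beta> * c)"
    unfolding ratio X[symmetric] by (rule lnb2)
  then show ?thesis unfolding S_def W_def K_def .
qed


lemma lam_card: "card (Lam L) = L * L"
  unfolding Lam_def by (simp add: card_cartesian_product)

lemma A0_big:
  assumes "3 \<le> L" "fb > 9"
  shows "real (card (Lam L)) / fb < real (card (A0 L))"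
proof -
  have "2 * (L div 2) + 1 \<ge> L" by linarith
  then have h3: "L \<le> 3 * (L div 2)" using assms(1) by linarith
  then have "L * L \<le> (3 * (L div 2)) * (3 * (L div 2))" by (intro mult_le_mono) auto
  then have "real (L * L) \<le> 9 * real ((L div 2) * (L div 2))" by (simp only: of_nat_le_iff[symmetric])
  then have n9: "real (card (Lam L)) \<le> 9 * real (card (A0 L))" unfolding lam_card A0_card .
  have pos: "real (card (Lam L)) > 0" unfolding lam_card using assms by simp
  have "real (card (Lam L)) / fb < real (card (Lam L)) / 9"
    using pos assms(2) by (intro divide_strict_left_mono) auto
  also have "\<dots> \<le> real (card (A0 L))" using n9 by simp
  finally show ?thesis .
qed

theorem lemmaA1:
  fixes J h :: real and L :: "real \<Rightarrow> nat" and f :: "real \<Rightarrow> real"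
  assumes "J > 0" and "h > 0" and "h < 2 * J"
    and "\<forall>n::nat. 2 * J / h \<noteq> real n"
    and "\<forall>\<beta>>0. odd (L \<beta>)"
    and "filterlim (\<lambda>\<beta>. real (card (Lam (L \<beta>)))) at_top at_top"
    and "\<forall>\<beta>>0. f \<beta> > 0"
    and "filterlim f at_top at_top"
    and "((\<lambda>\<beta>. ln (f \<beta>) / \<beta>) \<longlongrightarrow> 0) at_top"
    and "filterlim (\<lambda>\<beta>. real (card (Lam (L \<beta>))) / f \<beta>) at_top at_top"
  shows "filterlim
     (\<lambda>\<beta>. ln (gibbs (L \<beta>) J h \<beta>
                   (Sset (L \<beta>) (nat \<lceil>2 * J / h\<rceil>) - Wset (L \<beta>) (nat \<lceil>2 * J / h\<rceil>) (f \<beta>))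
               / gibbs (L \<beta>) J h \<beta> (Sset (L \<beta>) (nat \<lceil>2 * J / h\<rceil>))) / \<beta>)
     at_bot at_top"
proof -
  note J = assms(1) and h = assms(2) and hJ = assms(3)
  define x where "x = 2 * J / h"
  define lc where "lc = nat \<lceil>x\<rceil>"
  have x1: "x > 1" unfolding x_def using h hJ by (simp add: field_simps)
  have cx: "of_int \<lceil>x\<rceil> - 1 < x" "x \<le> of_int \<lceil>x\<rceil>" using ceiling_correct[of x] by auto
  have c2: "\<lceil>x\<rceil> \<ge> 2" using cx x1 by linarith
  have lc2: "2 \<le> lc" unfolding lc_def using c2 by linarith
  have n1: "1 \<le> nat \<lceil>x\<rceil>" using c2 by linarith
  have f1: "int (nat \<lceil>x\<rceil> - 1) = int (nat \<lceil>x\<rceil>) - int 1" by (rule of_nat_diff[OF n1])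
  have f2: "int (nat \<lceil>x\<rceil>) = \<lceil>x\<rceil>" using c2 by simp
  have i: "int (lc - 1) = \<lceil>x\<rceil> - 1" unfolding lc_def f1 f2 by simp
  have rlc: "real (lc - 1) = of_int \<lceil>x\<rceil> - 1" using arg_cong[OF i, of real_of_int] by simp
  have lcx: "real (lc - 1) < 2 * J / h" using rlc cx unfolding x_def by simp
  have lc1: "real (lc - 1) > 0" using lc2 by simp
  define c where "c = 2 * J / real (lc - 1) - h"
  have "h * real (lc - 1) < 2 * J" using lcx h by (simp add: field_simps)
  then have c0: "c > 0" unfolding c_def using lc1 by (simp add: field_simps)
  define N where "N \<beta> = real (card (Lam (L \<beta>)))" for \<beta>
  define K where "K \<beta> = N \<beta> / f \<beta>" for \<beta>
  define g where "g \<beta> = ln (gibbs (L \<beta>) J h \<beta> (Sset (L \<beta>) lc - Wset (L \<beta>) lc (f \<beta>))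
               / gibbs (L \<beta>) J h \<beta> (Sset (L \<beta>) lc)) / \<beta>" for \<beta>
  have ev1: "eventually (\<lambda>\<beta>. \<beta> > max 0 (4 / c)) at_top" by (rule eventually_gt_at_top)
  have ev2: "eventually (\<lambda>\<beta>. real ((lc+3)*(lc+3)) \<le> N \<beta>) at_top"
    using assms(6) unfolding filterlim_at_top N_def by blast
  have ev3: "eventually (\<lambda>\<beta>. 10 \<le> f \<beta>) at_top"
    using assms(8) unfolding filterlim_at_top by blast
  have ev4: "eventually (\<lambda>\<beta>. ln (f \<beta>) / \<beta> < c / 4) at_top"
  proof -
    have "(0::real) < c / 4" using c0 by simp
    then show ?thesis by (rule order_tendstoD(2)[OF assms(9)])
  qed
  have main: "eventually (\<lambda>\<beta>. g \<beta> \<le> - (c/2) * K \<beta>) at_top"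
    using ev1 ev2 ev3 ev4
  proof eventually_elim
    case (elim \<beta>)
    have b0: "\<beta> > 0" and b4: "\<beta> > 4 / c" using elim by auto
    have "(lc+3)*(lc+3) \<le> L \<beta> * L \<beta>" using elim(2) unfolding N_def lam_card by (simp only: of_nat_le_iff)
    then have Lb: "lc + 3 \<le> L \<beta>"
    proof -
      assume a: "(lc+3)*(lc+3) \<le> L \<beta> * L \<beta>"
      show ?thesis
      proof (rule ccontr)
        assume "\<not> lc + 3 \<le> L \<beta>"
        then have "L \<beta> \<le> lc + 2" by linarith
        then have "L \<beta> * L \<beta> \<le> (lc+2)*(lc+2)" by (intro mult_le_mono)
        also have "\<dots> < (lc+3)*(lc+3)" by (rule mult_strict_mono) auto
        finally show False using a by simp
      qed
    qed
    then have L3: "3 \<le> L \<beta>" and lcL: "lc \<le> L \<beta>" by auto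
    have fb: "f \<beta> > 9" using elim(3) by simp
    have lnf: "ln (f \<beta>) < \<beta> * (c/4)" using elim(4) b0 by (simp add: field_simps)
    have "\<beta> * (c/4) \<le> \<beta> * c" using b0 c0 by simp
    then have lnb: "ln (f \<beta>) \<le> \<beta> * c" using lnf by linarith
    have co: "ln (gibbs (L \<beta>) J h \<beta> (Sset (L \<beta>) lc - Wset (L \<beta>) lc (f \<beta>)) / gibbs (L \<beta>) J h \<beta> (Sset (L \<beta>) lc))
           \<le> real (card (Lam (L \<beta>))) / f \<beta> * (1 + ln (f \<beta>) - \<beta> * c)"
      by (rule core[OF J h L3 lc2 lcL c_def b0 _ lnb A0_big[OF L3 fb]]) (use fb in simp)
    then have "g \<beta> \<le> real (card (Lam (L \<beta>))) / f \<beta> * (1 + ln (f \<beta>) - \<beta> * c) / \<beta>"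
      unfolding g_def by (rule divide_right_mono) (use b0 in simp)
    also have "\<dots> = K \<beta> * (1 + ln (f \<beta>) - \<beta> * c) / \<beta>" unfolding K_def N_def ..
    also have "K \<beta> * (1 + ln (f \<beta>) - \<beta> * c) / \<beta> = K \<beta> * (1/\<beta> + ln (f \<beta>)/\<beta> - c)"
      using b0 by (simp add: field_simps)
    also have "\<dots> \<le> K \<beta> * (- (c/2))"
    proof (rule mult_left_mono)
      have "1/\<beta> < c/4" using b4 b0 c0 by (simp add: field_simps)
      then show "1/\<beta> + ln (f \<beta>)/\<beta> - c \<le> - (c/2)" using elim(4) by linarith
      show "0 \<le> K \<beta>" unfolding K_def N_def using fb by simp
    qed
    finally show ?case by (simp add: mult.commute)
  qed
  have "filterlim g at_bot at_top"
    unfolding filterlim_at_bot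
  proof
    fix Z :: real
    have "eventually (\<lambda>\<beta>. - 2 * Z / c \<le> K \<beta>) at_top"
      using assms(10) unfolding filterlim_at_top K_def N_def by blast
    then show "eventually (\<lambda>\<beta>. g \<beta> \<le> Z) at_top" using main
    proof eventually_elim
      case (elim \<beta>)
      have "- (c/2) * K \<beta> \<le> - (c/2) * (- 2 * Z / c)" using elim(1) c0 by (intro mult_left_mono_neg) auto
      also have "\<dots> = Z" using c0 by (simp add: field_simps)
      finally show ?case using elim(2) by simp
    qed
  qed
  then show ?thesis unfolding g_def lc_def x_def .
qed


end
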